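(* Let $X$ be a gamble, $I=[\inf X,\sup X]$, $\phi:I\to\mathbb{R}$ convex and $\psi:I\to\mathbb{R}$ concave. Let $\underline{P}$ be a 2-coherent lower prevision defined on a set of gambles containing $X$ and the other gambles involved (e.g. on all gambles), with conjugate $\overline{P}$. Define $x_L=l(\underline{P}(X))$, $x_U=u(\underline{P}(X))$, $z_L=l(\overline{P}(X))$, $z_U=u(\overline{P}(X))$. (a1) If $\inf X\le x_L<x_U\le\sup X$, then $$\underline{P}(\psi(X))\le\psi(x_U)\frac{\underline{P}(X)-x_L}{x_U-x_L}+\psi(x_L)\Big(1-\frac{\underline{P}(X)-x_L}{x_U-x_L}\Big)\le\psi(\underline{P}(X)).$$ (a2) If $\inf X\le z_L<z_U\le\sup X$ and $\psi(z_L)\le\psi(z_U)$, then $$\overline{P}(\psi(X))\le\psi(z_U)\frac{\overline{P}(X)-z_L}{z_U-z_L}+\psi(z_L)\Big(1-\frac{\overline{P}(X)-z_L}{z_U-z_L}\Big)\le\psi(\overline{P}(X)).$$ (b1) If $\inf X\le z_L<z_U\le\sup X$, then $$\overline{P}(\phi(X))\ge\phi(z_U)\frac{\overline{P}(X)-z_L}{z_U-z_L}+\phi(z_L)\Big(1-\frac{\overline{P}(X)-z_L}{z_U-z_L}\Big)\ge\phi(\overline{P}(X)).$$ (b2) If $\inf X\le x_L<x_U\le\sup X$ and $\phi(x_L)\le\phi(x_U)$, then $$\underline{P}(\phi(X))\ge\phi(x_U)\frac{\underline{P}(X)-x_L}{x_U-x_L}+\phi(x_L)\Big(1-\frac{\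underline{P}(X)-x_L}{x_U-x_L}\Big)\ge\phi(\underline{P}(X)).$$
   Context: $\Pi$ is a partition of the sure event into pairwise disjoint non-impossible events; a gamble is a bounded map $X:\Pi\to\mathbb{R}$ with image set $Im(X)=\{X(\omega):\omega\in\Pi\}$; $f(X)$ denotes $\omega\mapsto f(X(\omega))$. For $k\in[\inf X,\sup X]$, $l(k)=\sup\{x\in Im(X):x\le k\}$ and $u(k)=\inf\{x\in Im(X):x\ge k\}$. A lower prevision $\underline{P}:\mathcal{D}\to\mathbb{R}$ is 2-coherent iff for all $X_0,X_1\in\mathcal{D}$, $s_1\ge 0$, $s_0\in\mathbb{R}$, $\sup[s_1(X_1-\underline{P}(X_1))-s_0(X_0-\underline{P}(X_0))]\ge 0$; its conjugate is $\overline{P}(Y)=-\underline{P}(-Y)$. *)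

theory Defs
  imports "HOL-Analysis.Analysis"
begin

text \<open>The partition Pi of the sure event is modelled by the (nonempty) type 'w:
  each element of 'w is an atom of Pi. A gamble is a bounded real map on 'w.\<close>

definition gamble :: "('w \<Rightarrow> real) \<Rightarrow> bool" where
  "gamble X \<longleftrightarrow> bounded (range X)"

text \<open>l(k) = sup of image points below k, u(k) = inf of image points above k,
  taken in the extended reals (empty sup = -infinity, empty inf = +infinity).\<close>

definition l_img :: "('w \<Rightarrow> real) \<Rightarrow> real \<Rightarrow> ereal" where
  "l_img X k = Sup (ereal ` {x \<in> range X. x \<le> k})"

definition u_img :: "('w \<Rightarrow> real) \<Rightarrow> real \<Rightarrow> ereal" where
  "u_img X k = Inf (ereal ` {x \<in> range X. k \<le> x})"

definition coherent2 :: "('w \<Rightarrow> real) set \<Rightarrow> (('w \<Rightarrow> real) \<Rightarrow> real) \<Rightarrow> bool" where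
  "coherent2 D P \<longleftrightarrow>
     (\<forall>X0\<in>D. \<forall>X1\<in>D. \<forall>s1::real. \<forall>s0::real. s1 \<ge> 0 \<longrightarrow>
        Sup (range (\<lambda>w. s1 * (X1 w - P X1) - s0 * (X0 w - P X0))) \<ge> 0)"

definition conj_upper :: "(('w \<Rightarrow> real) \<Rightarrow> real) \<Rightarrow> ('w \<Rightarrow> real) \<Rightarrow> real" where
  "conj_upper P Y = - P (\<lambda>w. - Y w)"

end

theory Submission
  imports Defs
begin

lemma convex_line:
  fixes f :: "real \<Rightarrow> real"
  assumes cf: "convex_on {lo..hi} f" and h: "lo \<le> a" "a < b" "b \<le> hi" "lo \<le> x" "x \<le> hi"
    and hx: "x \<le> a \<or> b \<le> x"
  shows "f a + (x - a) * ((f b - f a) / (b - a)) \<le> f x"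
proof -
  have ba: "b - a > 0" using h by simp
  have key: "(b - x) * f a - (a - x) * f b \<le> (b - a) * f x"
  proof (cases "x \<le> a")
    case True
    show ?thesis
    proof (cases "x = a")
      case True then show ?thesis by (simp add: algebra_simps)
    next
      case False
      with \<open>x \<le> a\<close> have xa: "x < a" by simp
      define \<mu> where "\<mu> = (b - a) / (b - x)"
      have bx: "b - x > 0" using xa h by simp
      have m0: "0 \<le> \<mu>" "\<mu> \<le> 1" using xa h bx by (auto simp: \<mu>_def field_simps)
      have mm: "\<mu> * (b - x) = b - a" using bx by (simp add: \<mu>_def)
      have eq: "\<mu> *\<^sub>R x + (1 - \<mu>) *\<^sub>R b = a" using mm by (simp add: algebra_simps)
      have "f (\<mu> *\<^sub>R x + (1 - \<mu>) *\<^sub>R b) \<le> \<mu> * f x + (1 - \<mu>) * f b"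
        using convex_onD[OF cf, of "1 - \<mu>" x b] m0 h xa by auto
      then have "f a \<le> \<mu> * f x + (1 - \<mu>) * f b" using eq by simp
      then have "(b - x) * f a \<le> (b - x) * (\<mu> * f x + (1 - \<mu>) * f b)"
        using bx by (simp add: mult_left_mono)
      also have "\<dots> = (\<mu> * (b - x)) * f x + ((b - x) - \<mu> * (b - x)) * f b" by (simp add: algebra_simps)
      also have "\<dots> = (b - a) * f x + (a - x) * f b" unfolding mm by simp
      finally show ?thesis by simp
    qed
  next
    case False
    with hx have bxx: "b \<le> x" by simp
    show ?thesis
    proof (cases "x = b")
      case True then show ?thesis by (simp add: algebra_simps)
    next
      case False
      with bxx have xb: "b < x" by simp
      define \<mu> where "\<mu> = (b - a) / (x - a)"
      have xa: "x - a > 0" using xb h by simp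
      have m0: "0 \<le> \<mu>" "\<mu> \<le> 1" using xb h xa by (auto simp: \<mu>_def field_simps)
      have mm: "\<mu> * (x - a) = b - a" using xa by (simp add: \<mu>_def)
      have eq: "\<mu> *\<^sub>R x + (1 - \<mu>) *\<^sub>R a = b" using mm by (simp add: algebra_simps)
      have "f (\<mu> *\<^sub>R x + (1 - \<mu>) *\<^sub>R a) \<le> \<mu> * f x + (1 - \<mu>) * f a"
        using convex_onD[OF cf, of "1 - \<mu>" x a] m0 h xb by auto
      then have "f b \<le> \<mu> * f x + (1 - \<mu>) * f a" using eq by simp
      then have "(x - a) * f b \<le> (x - a) * (\<mu> * f x + (1 - \<mu>) * f a)"
        using xa by (simp add: mult_left_mono)
      also have "\<dots> = (\<mu> * (x - a)) * f x + ((x - a) - \<mu> * (x - a)) * f a" by (simp add: algebra_simps)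
      also have "\<dots> = (b - a) * f x + (x - b) * f a" unfolding mm by simp
      finally show ?thesis by (simp add: algebra_simps)
    qed
  qed
  have "f a + (x - a) * ((f b - f a) / (b - a)) = ((b - a) * f a + (x - a) * (f b - f a)) / (b - a)"
    using ba by (simp add: field_simps)
  also have "\<dots> \<le> f x" using key ba by (simp add: divide_le_eq algebra_simps)
  finally show ?thesis .
qed

lemma convex_mid:
  fixes f :: "real \<Rightarrow> real"
  assumes cf: "convex_on {lo..hi} f" and h: "lo \<le> a" "a < b" "b \<le> hi" "a \<le> k" "k \<le> b"
  shows "f k \<le> f b * ((k - a) / (b - a)) + f a * (1 - (k - a) / (b - a))"
proof -
  have c2: "convex_on {a..b} f" using cf h by (intro convex_on_subset[OF cf]) auto
  have "f k \<le> (f b - f a) / (b - a) * (k - a) + f a"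
    using convex_onD_Icc'[OF c2, of k] h by simp
  also have "\<dots> = (f b - f a) * ((k - a) / (b - a)) + f a" by simp
  also have "\<dots> = f b * ((k - a) / (b - a)) + f a * (1 - (k - a) / (b - a))"
    by (simp only: algebra_simps)
  finally show ?thesis .
qed

lemma coh_bound:
  assumes "coherent2 D P" "X0 \<in> D" "X1 \<in> D" "s1 \<ge> 0"
    and b: "\<And>w. s1 * X1 w - s0 * X0 w \<le> c"
  shows "s1 * P X1 - s0 * P X0 \<le> c"
proof -
  have "Sup (range (\<lambda>w. s1 * (X1 w - P X1) - s0 * (X0 w - P X0))) \<ge> 0"
    using assms(1-4) unfolding coherent2_def by blast
  moreover have "Sup (range (\<lambda>w. s1 * (X1 w - P X1) - s0 * (X0 w - P X0))) \<le> c - s1 * P X1 + s0 * P X0"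
    by (rule cSUP_least) (use b in \<open>auto simp: algebra_simps\<close>)
  ultimately show ?thesis by linarith
qed

lemma gap:
  fixes X :: "'w \<Rightarrow> real"
  assumes g: "gamble X" and h1: "ereal (Inf (range X)) \<le> l_img X k"
    and h2: "l_img X k < u_img X k" and h3: "u_img X k \<le> ereal (Sup (range X))"
  defines "a \<equiv> real_of_ereal (l_img X k)" and "b \<equiv> real_of_ereal (u_img X k)"
  shows "Inf (range X) \<le> a" "a < b" "b \<le> Sup (range X)" "a \<le> k" "k \<le> b"
    "\<And>w. X w \<le> a \<or> b \<le> X w" "\<And>w. Inf (range X) \<le> X w" "\<And>w. X w \<le> Sup (range X)"
proof -
  have bd: "bdd_above (range X)" "bdd_below (range X)"
    using g unfolding gamble_def by (auto simp: bounded_imp_bdd_above bounded_imp_bdd_below)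
  show "\<And>w. Inf (range X) \<le> X w" using bd by (auto intro: cInf_lower)
  show "\<And>w. X w \<le> Sup (range X)" using bd by (auto intro: cSup_upper)
  have lk: "l_img X k \<le> ereal k" unfolding l_img_def by (rule Sup_least) auto
  have uk: "ereal k \<le> u_img X k" unfolding u_img_def by (rule Inf_greatest) auto
  have lfin: "l_img X k = ereal a" unfolding a_def using h1 lk
    by (cases "l_img X k") auto
  have ufin: "u_img X k = ereal b" unfolding b_def using h3 uk
    by (cases "u_img X k") auto
  show "Inf (range X) \<le> a" using h1 lfin by simp
  show "b \<le> Sup (range X)" using h3 ufin by simp
  show "a < b" using h2 lfin ufin by simp
  show "a \<le> k" using lk lfin by simp
  show "k \<le> b" using uk ufin by simp
  fix w
  show "X w \<le> a \<or> b \<le> X w"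
  proof (cases "X w \<le> k")
    case True
    then have "ereal (X w) \<le> l_img X k" unfolding l_img_def by (intro Sup_upper) auto
    then show ?thesis using lfin by simp
  next
    case False
    then have "u_img X k \<le> ereal (X w)" unfolding u_img_def by (intro Inf_lower) auto
    then show ?thesis using ufin by simp
  qed
qed


lemma lin_id:
  fixes fa fb a b k :: real
  shows "fb * ((k - a) / (b - a)) + fa * (1 - (k - a) / (b - a)) = fa + (k - a) * ((fb - fa) / (b - a))"
proof -
  have 1: "(k - a) * ((fb - fa) / (b - a)) = (fb - fa) * ((k - a) / (b - a))" by simp
  have 2: "fb * t + fa * (1 - t) = fa + (fb - fa) * t" for t :: real by (simp add: algebra_simps)
  show ?thesis unfolding 1 2 ..
qed

lemma concave_line:
  fixes f :: "real \<Rightarrow> real"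
  assumes cf: "concave_on {lo..hi} f" and h: "lo \<le> a" "a < b" "b \<le> hi" "lo \<le> x" "x \<le> hi"
    and hx: "x \<le> a \<or> b \<le> x"
  shows "f x \<le> f a + (x - a) * ((f b - f a) / (b - a))"
proof -
  have "- f a + (x - a) * ((- f b - - f a) / (b - a)) \<le> - f x"
    using convex_line[of lo hi "\<lambda>x. - f x", OF cf[unfolded concave_on_def] h hx] by simp
  moreover have "(- f b - - f a) = - (f b - f a)" by simp
  then have "(x - a) * ((- f b - - f a) / (b - a)) = - ((x - a) * ((f b - f a) / (b - a)))"
    by (simp only: minus_divide_left[symmetric] mult_minus_right)
  ultimately show ?thesis by linarith
qed

lemma concave_mid:
  fixes f :: "real \<Rightarrow> real"
  assumes cf: "concave_on {lo..hi} f" and h: "lo \<le> a" "a < b" "b \<le> hi" "a \<le> k" "k \<le> b"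
  shows "f b * ((k - a) / (b - a)) + f a * (1 - (k - a) / (b - a)) \<le> f k"
  using convex_mid[of lo hi "\<lambda>x. - f x", OF cf[unfolded concave_on_def] h] by simp

theorem theorem5:
  fixes X :: "'w \<Rightarrow> real"
    and D :: "('w \<Rightarrow> real) set"
    and P :: "('w \<Rightarrow> real) \<Rightarrow> real"
    and \<phi> \<psi> :: "real \<Rightarrow> real"
  assumes gX: "gamble X"
    and convphi: "convex_on {Inf (range X)..Sup (range X)} \<phi>"
    and concpsi: "concave_on {Inf (range X)..Sup (range X)} \<psi>"
    and Dg: "\<forall>Y\<in>D. gamble Y"
    and coh: "coherent2 D P"
    and inD: "X \<in> D" "(\<lambda>w. - X w) \<in> D"
      "(\<lambda>w. \<psi> (X w)) \<in> D" "(\<lambda>w. - \<psi> (X w)) \<in> D"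
      "(\<lambda>w. \<phi> (X w)) \<in> D" "(\<lambda>w. - \<phi> (X w)) \<in> D"
  defines "xL \<equiv> real_of_ereal (l_img X (P X))"
    and "xU \<equiv> real_of_ereal (u_img X (P X))"
    and "zL \<equiv> real_of_ereal (l_img X (conj_upper P X))"
    and "zU \<equiv> real_of_ereal (u_img X (conj_upper P X))"
  shows
    "(ereal (Inf (range X)) \<le> l_img X (P X) \<and> l_img X (P X) < u_img X (P X)
        \<and> u_img X (P X) \<le> ereal (Sup (range X)) \<longrightarrow>
       P (\<lambda>w. \<psi> (X w))
         \<le> \<psi> xU * ((P X - xL) / (xU - xL)) + \<psi> xL * (1 - (P X - xL) / (xU - xL))
       \<and> \<psi> xU * ((P X - xL) / (xU - xL)) + \<psi> xL * (1 - (P X - xL) / (xU - xL))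
         \<le> \<psi> (P X))
   \<and> (ereal (Inf (range X)) \<le> l_img X (conj_upper P X)
        \<and> l_img X (conj_upper P X) < u_img X (conj_upper P X)
        \<and> u_img X (conj_upper P X) \<le> ereal (Sup (range X)) \<and> \<psi> zL \<le> \<psi> zU \<longrightarrow>
       conj_upper P (\<lambda>w. \<psi> (X w))
         \<le> \<psi> zU * ((conj_upper P X - zL) / (zU - zL))
           + \<psi> zL * (1 - (conj_upper P X - zL) / (zU - zL))
       \<and> \<psi> zU * ((conj_upper P X - zL) / (zU - zL))
           + \<psi> zL * (1 - (conj_upper P X - zL) / (zU - zL))
         \<le> \<psi> (conj_upper P X))
   \<and> (ereal (Inf (range X)) \<le> l_img X (conj_upper P X)
        \<and> l_img X (conj_upper P X) < u_img X (conj_upper P X)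
        \<and> u_img X (conj_upper P X) \<le> ereal (Sup (range X)) \<longrightarrow>
       conj_upper P (\<lambda>w. \<phi> (X w))
         \<ge> \<phi> zU * ((conj_upper P X - zL) / (zU - zL))
           + \<phi> zL * (1 - (conj_upper P X - zL) / (zU - zL))
       \<and> \<phi> zU * ((conj_upper P X - zL) / (zU - zL))
           + \<phi> zL * (1 - (conj_upper P X - zL) / (zU - zL))
         \<ge> \<phi> (conj_upper P X))
   \<and> (ereal (Inf (range X)) \<le> l_img X (P X) \<and> l_img X (P X) < u_img X (P X)
        \<and> u_img X (P X) \<le> ereal (Sup (range X)) \<and> \<phi> xL \<le> \<phi> xU \<longrightarrow>
       P (\<lambda>w. \<phi> (X w))
         \<ge> \<phi> xU * ((P X - xL) / (xU - xL)) + \<phi> xL * (1 - (P X - xL) / (xU - xL))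
       \<and> \<phi> xU * ((P X - xL) / (xU - xL)) + \<phi> xL * (1 - (P X - xL) / (xU - xL))
         \<ge> \<phi> (P X))"
proof (intro conjI impI)
  let ?lo = "Inf (range X)" and ?hi = "Sup (range X)"
  have cu: "conj_upper P X = - P (\<lambda>w. - X w)" "conj_upper P (\<lambda>w. \<psi> (X w)) = - P (\<lambda>w. - \<psi> (X w))"
    "conj_upper P (\<lambda>w. \<phi> (X w)) = - P (\<lambda>w. - \<phi> (X w))" by (simp_all add: conj_upper_def)
  {
    assume H: "ereal ?lo \<le> l_img X (P X) \<and> l_img X (P X) < u_img X (P X) \<and> u_img X (P X) \<le> ereal ?hi"
    note G = gap[of X "P X", OF gX, folded xL_def xU_def, OF H[THEN conjunct1] H[THEN conjunct2, THEN conjunct1] H[THEN conjunct2, THEN conjunct2]]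
    define m where "m = (\<psi> xU - \<psi> xL) / (xU - xL)"
    have pw: "\<psi> (X w) \<le> \<psi> xL + (X w - xL) * m" for w
      unfolding m_def by (rule concave_line[OF concpsi G(1,2,3,7,8,6)])
    have cb: "1 * P (\<lambda>w. \<psi> (X w)) - m * P X \<le> \<psi> xL - m * xL"
      by (rule coh_bound[OF coh inD(1) inD(3)]) (use pw in \<open>auto simp: algebra_simps\<close>)
    have e: "(P X - xL) * m = m * P X - m * xL" by (simp add: algebra_simps)
    show "P (\<lambda>w. \<psi> (X w))
         \<le> \<psi> xU * ((P X - xL) / (xU - xL)) + \<psi> xL * (1 - (P X - xL) / (xU - xL))"
      unfolding lin_id m_def[symmetric] using cb e by linarith
    show "\<psi> xU * ((P X - xL) / (xU - xL)) + \<psi> xL * (1 - (P X - xL) / (xU - xL)) \<le> \<psi> (P X)"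
      by (rule concave_mid[OF concpsi G(1,2,3,4,5)])
  }
  {
    assume H: "ereal ?lo \<le> l_img X (P X) \<and> l_img X (P X) < u_img X (P X) \<and> u_img X (P X) \<le> ereal ?hi \<and> \<phi> xL \<le> \<phi> xU"
    note G = gap[of X "P X", OF gX, folded xL_def xU_def, OF H[THEN conjunct1] H[THEN conjunct2, THEN conjunct1] H[THEN conjunct2, THEN conjunct2, THEN conjunct1]]
    define m where "m = (\<phi> xU - \<phi> xL) / (xU - xL)"
    have m0: "m \<ge> 0" unfolding m_def using H G(2) by simp
    have pw: "\<phi> xL + (X w - xL) * m \<le> \<phi> (X w)" for w
      unfolding m_def by (rule convex_line[OF convphi G(1,2,3,7,8,6)])
    have cb: "m * P X - 1 * P (\<lambda>w. \<phi> (X w)) \<le> m * xL - \<phi> xL"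
      by (rule coh_bound[OF coh inD(5) inD(1) m0]) (use pw in \<open>auto simp: algebra_simps\<close>)
    have e: "(P X - xL) * m = m * P X - m * xL" by (simp add: algebra_simps)
    show "P (\<lambda>w. \<phi> (X w))
         \<ge> \<phi> xU * ((P X - xL) / (xU - xL)) + \<phi> xL * (1 - (P X - xL) / (xU - xL))"
      unfolding lin_id m_def[symmetric] using cb e by linarith
    show "\<phi> xU * ((P X - xL) / (xU - xL)) + \<phi> xL * (1 - (P X - xL) / (xU - xL)) \<ge> \<phi> (P X)"
      by (rule convex_mid[OF convphi G(1,2,3,4,5)])
  }
  {
    assume H: "ereal ?lo \<le> l_img X (conj_upper P X) \<and> l_img X (conj_upper P X) < u_img X (conj_upper P X) \<and> u_img X (conj_upper P X) \<le> ereal ?hi \<and> \<psi> zL \<le> \<psi> zU"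
    note G = gap[of X "conj_upper P X", OF gX, folded zL_def zU_def, OF H[THEN conjunct1] H[THEN conjunct2, THEN conjunct1] H[THEN conjunct2, THEN conjunct2, THEN conjunct1]]
    define m where "m = (\<psi> zU - \<psi> zL) / (zU - zL)"
    have m0: "m \<ge> 0" unfolding m_def using H G(2) by simp
    have pw: "\<psi> (X w) \<le> \<psi> zL + (X w - zL) * m" for w
      unfolding m_def by (rule concave_line[OF concpsi G(1,2,3,7,8,6)])
    have cb: "m * P (\<lambda>w. - X w) - 1 * P (\<lambda>w. - \<psi> (X w)) \<le> \<psi> zL - m * zL"
      by (rule coh_bound[OF coh inD(4) inD(2) m0]) (use pw in \<open>auto simp: algebra_simps\<close>)
    have e: "(conj_upper P X - zL) * m = - (m * P (\<lambda>w. - X w)) - m * zL" by (simp add: cu algebra_simps)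
    show "conj_upper P (\<lambda>w. \<psi> (X w))
         \<le> \<psi> zU * ((conj_upper P X - zL) / (zU - zL))
           + \<psi> zL * (1 - (conj_upper P X - zL) / (zU - zL))"
      unfolding lin_id m_def[symmetric] using cb e cu(2) by linarith
    show "\<psi> zU * ((conj_upper P X - zL) / (zU - zL))
           + \<psi> zL * (1 - (conj_upper P X - zL) / (zU - zL))
         \<le> \<psi> (conj_upper P X)"
      by (rule concave_mid[OF concpsi G(1,2,3,4,5)])
  }
  {
    assume H: "ereal ?lo \<le> l_img X (conj_upper P X) \<and> l_img X (conj_upper P X) < u_img X (conj_upper P X) \<and> u_img X (conj_upper P X) \<le> ereal ?hi"
    note G = gap[of X "conj_upper P X", OF gX, folded zL_def zU_def, OF H[THEN conjunct1] H[THEN conjunct2, THEN conjunct1] H[THEN conjunct2, THEN conjunct2]]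
    define m where "m = (\<phi> zU - \<phi> zL) / (zU - zL)"
    have pw: "\<phi> zL + (X w - zL) * m \<le> \<phi> (X w)" for w
      unfolding m_def by (rule convex_line[OF convphi G(1,2,3,7,8,6)])
    have cb: "1 * P (\<lambda>w. - \<phi> (X w)) - m * P (\<lambda>w. - X w) \<le> m * zL - \<phi> zL"
      by (rule coh_bound[OF coh inD(2) inD(6)]) (use pw in \<open>auto simp: algebra_simps\<close>)
    have e: "(conj_upper P X - zL) * m = - (m * P (\<lambda>w. - X w)) - m * zL" by (simp add: cu algebra_simps)
    show "conj_upper P (\<lambda>w. \<phi> (X w))
         \<ge> \<phi> zU * ((conj_upper P X - zL) / (zU - zL))
           + \<phi> zL * (1 - (conj_upper P X - zL) / (zU - zL))"
      unfolding lin_id m_def[symmetric] using cb e cu(3) by linarith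
    show "\<phi> zU * ((conj_upper P X - zL) / (zU - zL))
           + \<phi> zL * (1 - (conj_upper P X - zL) / (zU - zL))
         \<ge> \<phi> (conj_upper P X)"
      by (rule convex_mid[OF convphi G(1,2,3,4,5)])
  }
qed

end
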